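(* Let $X\in\mathbb{R}^{n\times d}$ have zero-mean columns and satisfy $\frac{1}{n}X^\top X=I_d+\rho(\boldsymbol{e}_i\boldsymbol{e}_j^\top+\boldsymbol{e}_j\boldsymbol{e}_i^\top)$ for some indices $i\neq j$ and $0<\rho<1$, where $\boldsymbol{e}_k$ is the $k$-th standard basis vector. Let $Y=X\theta^*+\epsilon$ with $\theta^*\in\mathbb{R}^d$ and $\epsilon\sim\mathcal{N}(0,\sigma I_n)$. Let $\hat\theta$ be the unregularized least squares solution, i.e. $X^\top X\hat\theta=X^\top Y$, and assume $0<\hat\theta_i<\hat\theta_j$. For $\lambda_1>0,\lambda_2>0$ define $$\theta^1=\arg\min_{\theta\in\mathbb{R}^d}\frac{1}{2n}\|X\theta-Y\|_2^2+\lambda_1\|\theta\|_1,\qquad \theta^{\mathrm{El}}=\arg\min_{\theta\in\mathbb{R}^d}\frac{1}{2n}\|X\theta-Y\|_2^2+\lambda_1\|\theta\|_1+\frac{\lambda_2}{2}\|\theta\|_2^2,$$ and let $c=\dfrac{(1+\lambda_2-\rho^2)\hat\theta_i+\lambda_2\rho\hat\theta_j}{1+\lambda_2-\rho}$. Then: (a) if $\lambda_1<(1+\rho)\hat\theta_i$ then $\theta^1_i>0$ and $\theta^1_j>0$; if $(1+\rho)\hat\theta_i\le\lambda_1<\hat\theta_j+\rho\hat\theta_i$ then $\theta^1_i=0$ and $\theta^1_j>0$; if $\lambda_1\ge\hat\theta_j+\rho\hat\theta_i$ then $\theta^1_i=\theta^1_j=0$; (b) if $\lambda_1<c$ then $\theta^{\mathrm{El}}_i>0$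 and $\theta^{\mathrm{El}}_j>0$; if $c\le\lambda_1<\hat\theta_j+\rho\hat\theta_i$ then $\theta^{\mathrm{El}}_i=0$ and $\theta^{\mathrm{El}}_j>0$; if $\lambda_1\ge\hat\theta_j+\rho\hat\theta_i$ then $\theta^{\mathrm{El}}_i=\theta^{\mathrm{El}}_j=0$. *)

theory Defs
  imports "HOL-Analysis.Analysis"
begin

definition basis_outer :: "'d::finite \<Rightarrow> 'd \<Rightarrow> real^'d^'d" where
  "basis_outer a b = (\<chi> r c. if r = a \<and> c = b then 1 else 0)"

definition l1norm :: "real^'d::finite \<Rightarrow> real" where
  "l1norm v = (\<Sum>k\<in>UNIV. \<bar>v $ k\<bar>)"

definition lasso_obj :: "real^'d::finite^'n::finite \<Rightarrow> real^'n \<Rightarrow> real \<Rightarrow> real^'d \<Rightarrow> real" where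
  "lasso_obj X Y l1 \<theta> =
     (norm (X *v \<theta> - Y))\<^sup>2 / (2 * real CARD('n)) + l1 * l1norm \<theta>"

definition enet_obj :: "real^'d::finite^'n::finite \<Rightarrow> real^'n \<Rightarrow> real \<Rightarrow> real \<Rightarrow> real^'d \<Rightarrow> real" where
  "enet_obj X Y l1 l2 \<theta> =
     (norm (X *v \<theta> - Y))\<^sup>2 / (2 * real CARD('n)) + l1 * l1norm \<theta> + l2 / 2 * (norm \<theta>)\<^sup>2"

end

theory Submission
  imports Defs
begin

lemma basis_outer_mv: "(basis_outer a b *v u) $ k = (if k = a then u $ b else (0::real))"
  by (simp add: basis_outer_def matrix_vector_mult_def if_distrib if_distribR sum.delta cong: if_cong)

lemma inner_mv_transpose: "inner (X *v u) w = inner u (transpose X *v (w::real^'n))"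
  by (metis dot_lmul_matrix vector_transpose_matrix)

lemma quad_identity:
  fixes X :: "real^'d^'n" and \<theta>hat \<theta> :: "real^'d" and Y :: "real^'n"
  assumes gram: "(1 / real CARD('n)) *\<^sub>R (transpose X ** X)
                 = mat 1 + \<rho> *\<^sub>R (basis_outer i j + basis_outer j i)"
    and ls: "(transpose X ** X) *v \<theta>hat = transpose X *v Y"
    and ij: "i \<noteq> j"
  shows "(norm (X *v \<theta> - Y))\<^sup>2 / (2 * real CARD('n)) =
     (\<Sum>k\<in>UNIV. (\<theta>$k - \<theta>hat$k)\<^sup>2) / 2 + \<rho> * (\<theta>$i - \<theta>hat$i) * (\<theta>$j - \<theta>hat$j)
     + (norm (X *v \<theta>hat - Y))\<^sup>2 / (2 * real CARD('n))"
proof -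
  define N where "N = real CARD('n)"
  have N: "N > 0" by (simp add: N_def)
  define u where "u = \<theta> - \<theta>hat"
  define r where "r = X *v \<theta>hat - Y"
  define B where "B = basis_outer i j + basis_outer j i"
  have XtX: "transpose X ** X = N *\<^sub>R (mat 1 + \<rho> *\<^sub>R B)"
  proof -
    have "transpose X ** X = N *\<^sub>R ((1 / N) *\<^sub>R (transpose X ** X))" using N by simp
    also have "\<dots> = N *\<^sub>R (mat 1 + \<rho> *\<^sub>R B)" using gram unfolding N_def B_def by simp
    finally show ?thesis .
  qed
  have e: "X *v \<theta> - Y = X *v u + r"
    by (simp add: u_def r_def matrix_vector_mult_diff_distrib)
  have r0: "transpose X *v r = 0"
    using ls by (simp add: r_def matrix_vector_mult_diff_distrib matrix_vector_mul_assoc)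
  have cross: "inner (X *v u) r = 0"
    by (simp add: inner_mv_transpose r0 del: transpose_matrix_vector)
  have Bu: "inner u (B *v u) = 2 * (u$i * u$j)"
  proof -
    have "inner u (B *v u) = (\<Sum>k\<in>UNIV. u$k * ((if k = i then u$j else 0) + (if k = j then u$i else 0)))"
      by (simp add: inner_vec_def B_def matrix_vector_mult_add_rdistrib basis_outer_mv)
    also have "\<dots> = (\<Sum>k\<in>UNIV. (if k = i then u$k * u$j else 0) + (if k = j then u$k * u$i else 0))"
      by (rule sum.cong) (auto simp: distrib_left)
    also have "\<dots> = u$i * u$j + u$j * u$i"
      by (simp add: sum.distrib)
    finally show ?thesis by simp
  qed
  have uu: "inner u u = (\<Sum>k\<in>UNIV. (u$k)\<^sup>2)"
    by (simp add: inner_vec_def power2_eq_square)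
  have Xu: "(norm (X *v u))\<^sup>2 = N * ((\<Sum>k\<in>UNIV. (u$k)\<^sup>2) + \<rho> * (2 * (u$i * u$j)))"
  proof -
    have "(norm (X *v u))\<^sup>2 = inner u (transpose X *v (X *v u))"
      by (simp add: power2_norm_eq_inner inner_mv_transpose del: transpose_matrix_vector)
    also have "\<dots> = inner u ((transpose X ** X) *v u)"
      by (simp add: matrix_vector_mul_assoc del: transpose_matrix_vector)
    also have "\<dots> = N * (inner u u + \<rho> * inner u (B *v u))"
      by (simp add: XtX scaleR_matrix_vector_assoc[symmetric] matrix_vector_mult_add_rdistrib inner_add_right
           del: transpose_matrix_vector)
    finally show ?thesis using Bu uu by simp
  qed
  have "(norm (X *v \<theta> - Y))\<^sup>2 = (norm (X *v u))\<^sup>2 + (norm r)\<^sup>2"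
    by (simp add: e power2_norm_eq_inner inner_add_left inner_add_right cross cross[unfolded inner_commute[of "X *v u"]])
  thus ?thesis using Xu N unfolding N_def[symmetric] r_def[symmetric]
    by (simp add: u_def field_simps power2_eq_square)
qed


definition hfun :: "real \<Rightarrow> real \<Rightarrow> real \<Rightarrow> real \<Rightarrow> real \<Rightarrow> real \<Rightarrow> real \<Rightarrow> real" where
  "hfun \<rho> lam l2 a0 b0 a b = (a-a0)\<^sup>2/2 + (b-b0)\<^sup>2/2 + \<rho>*(a-a0)*(b-b0) + lam*(\<bar>a\<bar>+\<bar>b\<bar>) + l2/2*(a\<^sup>2+b\<^sup>2)"

lemma uniq2:
  assumes "0 < \<rho>" "\<rho> < 1" "l2 \<ge> 0" "lam \<ge> 0" "\<bar>sa\<bar> \<le> 1" "\<bar>sb\<bar> \<le> 1"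
    "sa * as = \<bar>as\<bar>" "sb * bs = \<bar>bs\<bar>"
    "as - a0 + \<rho>*(bs-b0) + l2*as = - lam * sa"
    "bs - b0 + \<rho>*(as-a0) + l2*bs = - lam * sb"
    "hfun \<rho> lam l2 a0 b0 a b \<le> hfun \<rho> lam l2 a0 b0 as bs"
  shows "a = as \<and> b = bs"
proof -
  define da where "da = a - as"
  define db where "db = b - bs"
  define Q where "Q = (1+l2)/2*(da\<^sup>2+db\<^sup>2) + \<rho>*da*db"
  have id: "hfun \<rho> lam l2 a0 b0 a b - hfun \<rho> lam l2 a0 b0 as bs
      = Q + lam*(\<bar>a\<bar> - sa*a) + lam*(\<bar>b\<bar> - sb*b)"
  proof -
    have "hfun \<rho> lam l2 a0 b0 a b - hfun \<rho> lam l2 a0 b0 as bs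
      = Q + (as - a0 + \<rho>*(bs-b0) + l2*as)*da + (bs - b0 + \<rho>*(as-a0) + l2*bs)*db
        + lam*(\<bar>a\<bar>+\<bar>b\<bar>) - lam*(\<bar>as\<bar>+\<bar>bs\<bar>)"
      unfolding hfun_def Q_def da_def db_def power2_eq_square by (simp add: field_simps)
    also have "\<dots> = Q + (- lam * sa)*da + (- lam * sb)*db
        + lam*(\<bar>a\<bar>+\<bar>b\<bar>) - lam*(sa * as + sb * bs)"
      by (simp only: assms(7-10))
    also have "\<dots> = Q + lam*(\<bar>a\<bar> - sa*a) + lam*(\<bar>b\<bar> - sb*b)"
      unfolding da_def db_def by (simp add: algebra_simps)
    finally show ?thesis .
  qed
  have sa: "sa*a \<le> \<bar>a\<bar>"
  proof -
    have "sa*a \<le> \<bar>sa\<bar>*\<bar>a\<bar>" by (metis abs_ge_self abs_mult)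
    also have "\<dots> \<le> \<bar>a\<bar>" using assms(5) by (simp add: mult_left_le_one_le)
    finally show ?thesis .
  qed
  have sb: "sb*b \<le> \<bar>b\<bar>"
  proof -
    have "sb*b \<le> \<bar>sb\<bar>*\<bar>b\<bar>" by (metis abs_ge_self abs_mult)
    also have "\<dots> \<le> \<bar>b\<bar>" using assms(6) by (simp add: mult_left_le_one_le)
    finally show ?thesis .
  qed
  have "lam*(\<bar>a\<bar> - sa*a) \<ge> 0" "lam*(\<bar>b\<bar> - sb*b) \<ge> 0" using sa sb assms(4) by auto
  hence Q0: "Q \<le> 0" using id assms(11) by linarith
  have "2*\<rho>*da*db \<ge> -\<rho>*(da\<^sup>2+db\<^sup>2)"
  proof -
    have "0 \<le> \<rho>*(da+db)\<^sup>2" using assms(1) by simp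
    thus ?thesis by (simp add: algebra_simps power2_eq_square)
  qed
  moreover have "2*Q = (da\<^sup>2+db\<^sup>2) + l2*(da\<^sup>2+db\<^sup>2) + 2*\<rho>*da*db"
    unfolding Q_def by (simp add: field_simps)
  moreover have "l2*(da\<^sup>2+db\<^sup>2) \<ge> 0" using assms(3) by simp
  moreover have "(1-\<rho>)*(da\<^sup>2+db\<^sup>2) = (da\<^sup>2+db\<^sup>2) - \<rho>*(da\<^sup>2+db\<^sup>2)"
    by (simp add: algebra_simps)
  ultimately have "2*Q \<ge> (1-\<rho>)*(da\<^sup>2+db\<^sup>2)" by linarith
  hence "(1-\<rho>)*(da\<^sup>2+db\<^sup>2) \<le> 0" using Q0 by linarith
  hence "da\<^sup>2+db\<^sup>2 \<le> 0" using assms(2) by (simp add: mult_le_0_iff)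
  hence "da = 0" "db = 0" by (simp_all add: add_nonneg_eq_0_iff sum_power2_le_zero_iff)
  thus ?thesis by (simp add: da_def db_def)
qed

lemma cases2:
  assumes r: "0 < \<rho>" "\<rho> < 1" and l2: "l2 \<ge> 0" and lam: "lam > 0"
    and a0: "0 < a0" "a0 < b0"
    and mn: "\<forall>x y. hfun \<rho> lam l2 a0 b0 a b \<le> hfun \<rho> lam l2 a0 b0 x y"
  shows "(lam < ((1+l2-\<rho>\<^sup>2)*a0 + l2*\<rho>*b0)/(1+l2-\<rho>) \<longrightarrow> a > 0 \<and> b > 0)
    \<and> (((1+l2-\<rho>\<^sup>2)*a0 + l2*\<rho>*b0)/(1+l2-\<rho>) \<le> lam \<and> lam < b0 + \<rho>*a0 \<longrightarrow> a = 0 \<and> b > 0)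
    \<and> (lam \<ge> b0 + \<rho>*a0 \<longrightarrow> a = 0 \<and> b = 0)"
proof -
  define m where "m = 1 + l2"
  have m1: "m \<ge> 1" using l2 by (simp add: m_def)
  have mr: "m - \<rho> > 0" using m1 r by simp
  define c where "c = ((1+l2-\<rho>\<^sup>2)*a0 + l2*\<rho>*b0)"
  have cdef: "((1+l2-\<rho>\<^sup>2)*a0 + l2*\<rho>*b0)/(1+l2-\<rho>) = c/(m-\<rho>)" by (simp add: c_def m_def)
  {
    assume "lam < ((1+l2-\<rho>\<^sup>2)*a0 + l2*\<rho>*b0)/(1+l2-\<rho>)"
    hence "lam < c/(m-\<rho>)" by (simp add: cdef)
    hence lc: "lam*(m-\<rho>) < c" using mr by (simp add: field_simps)
    define p where "p = a0 + \<rho>*b0 - lam"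
    define q where "q = b0 + \<rho>*a0 - lam"
    define D where "D = m*m - \<rho>*\<rho>"
    have D: "D > 0" unfolding D_def using m1 r
      by (smt (verit) mult_strict_mono mult_le_cancel_left1)
    define as where "as = (m*p - \<rho>*q)/D"
    define bs where "bs = (m*q - \<rho>*p)/D"
    have e1: "m*p - \<rho>*q = c - lam*(m-\<rho>)"
      unfolding p_def q_def c_def m_def by (simp add: algebra_simps power2_eq_square)
    have e2: "m*q - \<rho>*p = (c - lam*(m-\<rho>)) + (1-\<rho>)*(1+\<rho>+l2)*(b0-a0)"
      unfolding p_def q_def c_def m_def by (simp add: algebra_simps power2_eq_square)
    have pos3: "(1-\<rho>)*(1+\<rho>+l2)*(b0-a0) > 0" using r l2 a0 by simp
    have asp: "as > 0" unfolding as_def using e1 lc D by simp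
    have bsp: "bs > 0" unfolding bs_def using e2 lc D pos3 by simp
    have k1: "m*as + \<rho>*bs = p"
    proof -
      have "m*as + \<rho>*bs = (m*(m*p - \<rho>*q) + \<rho>*(m*q - \<rho>*p))/D"
        by (simp add: as_def bs_def add_divide_distrib)
      also have "\<dots> = (D*p)/D" by (simp add: D_def algebra_simps)
      finally show ?thesis using D by simp
    qed
    have k2: "\<rho>*as + m*bs = q"
    proof -
      have "\<rho>*as + m*bs = (\<rho>*(m*p - \<rho>*q) + m*(m*q - \<rho>*p))/D"
        by (simp add: as_def bs_def add_divide_distrib)
      also have "\<dots> = (D*q)/D" by (simp add: D_def algebra_simps)
      finally show ?thesis using D by simp
    qed
    have "a = as \<and> b = bs"
    proof (rule uniq2[where sa=1 and sb=1])
      show "as - a0 + \<rho>*(bs-b0) + l2*as = - lam * 1"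
        using k1 unfolding m_def p_def by (simp add: algebra_simps)
      show "bs - b0 + \<rho>*(as-a0) + l2*bs = - lam * 1"
        using k2 unfolding m_def q_def by (simp add: algebra_simps)
      show "hfun \<rho> lam l2 a0 b0 a b \<le> hfun \<rho> lam l2 a0 b0 as bs" using mn by blast
    qed (use r l2 lam asp bsp in auto)
    hence "a > 0 \<and> b > 0" using asp bsp by simp
  }
  note r1 = this
  {
    assume h: "((1+l2-\<rho>\<^sup>2)*a0 + l2*\<rho>*b0)/(1+l2-\<rho>) \<le> lam \<and> lam < b0 + \<rho>*a0"
    hence "c/(m-\<rho>) \<le> lam" by (simp add: cdef)
    hence lc: "c \<le> lam*(m-\<rho>)" using mr by (simp add: field_simps)
    define q where "q = b0 + \<rho>*a0 - lam"
    have q: "q > 0" using h by (simp add: q_def)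
    define bs where "bs = q/m"
    have bsp: "bs > 0" using q m1 by (simp add: bs_def)
    have bsq: "bs \<le> q" using q m1 by (simp add: bs_def divide_le_eq)
    define sa where "sa = (a0 + \<rho>*b0 - \<rho>*bs)/lam"
    have num1: "a0 + \<rho>*b0 - \<rho>*bs \<le> lam"
    proof -
      have "m*(a0 + \<rho>*b0 - \<rho>*bs) = m*a0 + m*\<rho>*b0 - \<rho>*q"
        using m1 by (simp add: bs_def algebra_simps)
      also have "\<dots> = c + \<rho>*lam"
        unfolding q_def c_def m_def by (simp add: algebra_simps power2_eq_square)
      also have "\<dots> \<le> m*lam" using lc by (simp add: algebra_simps)
      finally show ?thesis using m1 by simp
    qed
    have num2: "a0 + \<rho>*b0 - \<rho>*bs > 0"
    proof -
      have "\<rho>*bs \<le> \<rho>*q" using bsq r by simp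
      moreover have "\<rho>*q < \<rho>*(b0 + a0)"
      proof -
        have "\<rho>*a0 < a0" using r a0 by simp
        hence "q < b0 + a0" using lam by (simp add: q_def)
        thus ?thesis using r by simp
      qed
      moreover have "\<rho>*(b0+a0) < \<rho>*b0 + a0" using r a0 by (simp add: algebra_simps)
      ultimately show ?thesis by linarith
    qed
    have sa1: "\<bar>sa\<bar> \<le> 1" using num1 num2 lam by (simp add: sa_def)
    have "a = 0 \<and> b = bs"
    proof (rule uniq2[where sa=sa and sb=1])
      show "0 - a0 + \<rho>*(bs-b0) + l2*0 = - lam * sa"
      proof -
        have "lam * sa = a0 + \<rho>*b0 - \<rho>*bs" using lam by (simp add: sa_def)
        thus ?thesis by (simp add: algebra_simps)
      qed
      show "bs - b0 + \<rho>*(0-a0) + l2*bs = - lam * 1"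
      proof -
        have "m*bs = q" using m1 by (simp add: bs_def)
        thus ?thesis unfolding m_def q_def by (simp add: algebra_simps)
      qed
      show "hfun \<rho> lam l2 a0 b0 a b \<le> hfun \<rho> lam l2 a0 b0 0 bs" using mn by blast
    qed (use r l2 lam bsp sa1 in auto)
    hence "a = 0 \<and> b > 0" using bsp by simp
  }
  note r2 = this
  {
    assume h: "lam \<ge> b0 + \<rho>*a0"
    have h2: "a0 + \<rho>*b0 \<le> lam"
    proof -
      have "\<rho>*(b0 - a0) \<le> b0 - a0" using r a0 by (simp add: mult_left_le_one_le)
      thus ?thesis using h by (simp add: algebra_simps)
    qed
    have "a = 0 \<and> b = 0"
    proof (rule uniq2[where sa="(a0 + \<rho>*b0)/lam" and sb="(b0 + \<rho>*a0)/lam"])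
      show "0 - a0 + \<rho>*(0-b0) + l2*0 = - lam * ((a0 + \<rho>*b0)/lam)" using lam by simp
      show "0 - b0 + \<rho>*(0-a0) + l2*0 = - lam * ((b0 + \<rho>*a0)/lam)" using lam by simp
      show "hfun \<rho> lam l2 a0 b0 a b \<le> hfun \<rho> lam l2 a0 b0 0 0" using mn by blast
      show "\<bar>(a0 + \<rho>*b0)/lam\<bar> \<le> 1" using h2 lam r a0 by simp
      show "\<bar>(b0 + \<rho>*a0)/lam\<bar> \<le> 1" using h lam r a0 by simp
    qed (use r l2 lam in auto)
    hence "a = 0 \<and> b = 0" by simp
  }
  note r3 = this
  show ?thesis using r1 r2 r3 by blast
qed


lemma norm_sq_sum: "(norm (v::real^'d))\<^sup>2 = (\<Sum>k\<in>UNIV. (v$k)\<^sup>2)"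
  unfolding power2_norm_eq_inner by (simp add: inner_vec_def power2_eq_square)

lemma sum_split2:
  fixes f :: "'d::finite \<Rightarrow> real"
  assumes "i \<noteq> j"
  shows "(\<Sum>k\<in>UNIV. f k) = f i + f j + (\<Sum>k\<in>UNIV - {i, j}. f k)"
proof -
  have "(\<Sum>k\<in>UNIV. f k) = f i + (\<Sum>k\<in>UNIV - {i}. f k)"
    by (simp add: sum.remove)
  also have "(\<Sum>k\<in>UNIV - {i}. f k) = f j + (\<Sum>k\<in>UNIV - {i} - {j}. f k)"
    using assms by (subst sum.remove[of _ j]) auto
  also have "UNIV - {i} - {j} = UNIV - {i, j}" by auto
  finally show ?thesis by simp
qed

lemma reduce:
  fixes X :: "real^'d^'n" and \<theta>hat \<theta>m :: "real^'d" and Y :: "real^'n"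
  assumes gram: "(1 / real CARD('n)) *\<^sub>R (transpose X ** X)
                 = mat 1 + \<rho> *\<^sub>R (basis_outer i j + basis_outer j i)"
    and ls: "(transpose X ** X) *v \<theta>hat = transpose X *v Y"
    and ij: "i \<noteq> j"
    and mn: "\<forall>\<theta>. enet_obj X Y lam l2 \<theta>m \<le> enet_obj X Y lam l2 \<theta>"
  shows "\<forall>x y. hfun \<rho> lam l2 (\<theta>hat$i) (\<theta>hat$j) (\<theta>m$i) (\<theta>m$j) \<le> hfun \<rho> lam l2 (\<theta>hat$i) (\<theta>hat$j) x y"
proof (intro allI)
  fix x y
  define g where "g = (\<lambda>(v::real^'d) k. (v$k - \<theta>hat$k)\<^sup>2/2 + lam*\<bar>v$k\<bar> + l2/2*(v$k)\<^sup>2)"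
  define K where "K = (norm (X *v \<theta>hat - Y))\<^sup>2 / (2 * real CARD('n))"
  have obj: "enet_obj X Y lam l2 v = (\<Sum>k\<in>UNIV. g v k) + \<rho> * (v$i - \<theta>hat$i) * (v$j - \<theta>hat$j) + K" for v
  proof -
    have "enet_obj X Y lam l2 v = (\<Sum>k\<in>UNIV. (v$k - \<theta>hat$k)\<^sup>2) / 2 + \<rho> * (v$i - \<theta>hat$i) * (v$j - \<theta>hat$j) + K
        + lam * (\<Sum>k\<in>UNIV. \<bar>v$k\<bar>) + l2/2 * (\<Sum>k\<in>UNIV. (v$k)\<^sup>2)"
      unfolding enet_obj_def l1norm_def norm_sq_sum[symmetric] K_def
      using quad_identity[OF gram ls ij, of v] by simp
    also have "\<dots> = (\<Sum>k\<in>UNIV. g v k) + \<rho> * (v$i - \<theta>hat$i) * (v$j - \<theta>hat$j) + K"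
      by (simp add: g_def sum.distrib sum_distrib_left sum_divide_distrib)
    finally show ?thesis .
  qed
  define t where "t = (\<chi> k. if k = i then x else if k = j then y else \<theta>m$k)"
  have ti: "t$i = x" and tj: "t$j = y" using ij by (auto simp: t_def)
  have rest: "(\<Sum>k\<in>UNIV - {i, j}. g t k) = (\<Sum>k\<in>UNIV - {i, j}. g \<theta>m k)"
    by (rule sum.cong) (auto simp: g_def t_def)
  have "enet_obj X Y lam l2 \<theta>m \<le> enet_obj X Y lam l2 t" using mn by blast
  hence "g \<theta>m i + g \<theta>m j + \<rho> * (\<theta>m$i - \<theta>hat$i) * (\<theta>m$j - \<theta>hat$j)
      \<le> g t i + g t j + \<rho> * (t$i - \<theta>hat$i) * (t$j - \<theta>hat$j)"
    unfolding obj sum_split2[OF ij, of "g \<theta>m"] sum_split2[OF ij, of "g t"] rest by simp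
  thus "hfun \<rho> lam l2 (\<theta>hat$i) (\<theta>hat$j) (\<theta>m$i) (\<theta>m$j) \<le> hfun \<rho> lam l2 (\<theta>hat$i) (\<theta>hat$j) x y"
    unfolding hfun_def g_def ti tj by (simp add: algebra_simps)
qed

lemma lasso_enet: "lasso_obj X Y l \<theta> = enet_obj X Y l 0 \<theta>"
  by (simp add: lasso_obj_def enet_obj_def)


theorem proposition5p1:
  fixes X :: "real^'d^'n" and \<theta>star \<theta>hat \<theta>1 \<theta>El :: "real^'d" and \<epsilon> Y :: "real^'n"
    and i j :: 'd and \<rho> lam1 lam2 :: real
  assumes zero_mean: "\<forall>k. (\<Sum>r\<in>UNIV. X $ r $ k) = 0"
    and ij: "i \<noteq> j"
    and rho: "0 < \<rho>" "\<rho> < 1"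
    and gram: "(1 / real CARD('n)) *\<^sub>R (transpose X ** X)
                 = mat 1 + \<rho> *\<^sub>R (basis_outer i j + basis_outer j i)"
    and Y_def: "Y = X *v \<theta>star + \<epsilon>"
    and ls: "(transpose X ** X) *v \<theta>hat = transpose X *v Y"
    and hat_pos: "0 < \<theta>hat $ i" "\<theta>hat $ i < \<theta>hat $ j"
    and lam: "0 < lam1" "0 < lam2"
    and lasso_min: "\<forall>\<theta>. lasso_obj X Y lam1 \<theta>1 \<le> lasso_obj X Y lam1 \<theta>"
    and enet_min: "\<forall>\<theta>. enet_obj X Y lam1 lam2 \<theta>El \<le> enet_obj X Y lam1 lam2 \<theta>"
  shows
    "(lam1 < (1 + \<rho>) * \<theta>hat $ i \<longrightarrow> \<theta>1 $ i > 0 \<and> \<theta>1 $ j > 0) \<and>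
     ((1 + \<rho>) * \<theta>hat $ i \<le> lam1 \<and> lam1 < \<theta>hat $ j + \<rho> * \<theta>hat $ i
        \<longrightarrow> \<theta>1 $ i = 0 \<and> \<theta>1 $ j > 0) \<and>
     (lam1 \<ge> \<theta>hat $ j + \<rho> * \<theta>hat $ i \<longrightarrow> \<theta>1 $ i = 0 \<and> \<theta>1 $ j = 0) \<and>
     (let c = ((1 + lam2 - \<rho>\<^sup>2) * \<theta>hat $ i + lam2 * \<rho> * \<theta>hat $ j) / (1 + lam2 - \<rho>) in
       (lam1 < c \<longrightarrow> \<theta>El $ i > 0 \<and> \<theta>El $ j > 0) \<and>
       (c \<le> lam1 \<and> lam1 < \<theta>hat $ j + \<rho> * \<theta>hat $ i \<longrightarrow> \<theta>El $ i = 0 \<and> \<theta>El $ j > 0) \<and>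
       (lam1 \<ge> \<theta>hat $ j + \<rho> * \<theta>hat $ i \<longrightarrow> \<theta>El $ i = 0 \<and> \<theta>El $ j = 0))"
proof -
  define a0 where "a0 = \<theta>hat $ i"
  define b0 where "b0 = \<theta>hat $ j"
  have a0: "0 < a0" "a0 < b0" using hat_pos by (simp_all add: a0_def b0_def)
  have mn1: "\<forall>\<theta>. enet_obj X Y lam1 0 \<theta>1 \<le> enet_obj X Y lam1 0 \<theta>"
    using lasso_min by (simp add: lasso_enet)
  note C1 = cases2[OF rho order.refl lam(1) a0 reduce[OF gram ls ij mn1, folded a0_def b0_def]]
  note C2 = cases2[OF rho less_imp_le[OF lam(2)] lam(1) a0 reduce[OF gram ls ij enet_min, folded a0_def b0_def]]
  have cc: "(1-\<rho>\<^sup>2) * \<theta>hat $ i/(1-\<rho>) = (1+\<rho>) * \<theta>hat $ i"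
  proof -
    have "1 - \<rho> \<noteq> 0" using rho by simp
    moreover have "1 - \<rho>\<^sup>2 = (1-\<rho>)*(1+\<rho>)" by (simp add: algebra_simps power2_eq_square)
    ultimately show ?thesis by simp
  qed
  show ?thesis using C1 C2 unfolding Let_def a0_def b0_def by (simp add: cc)
qed

end
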